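(* Assume the setting in the context, with $\mathcal Y=\mathbb R$ and additive corruption $\tilde Y=Y+Z$. Make the following assumptions. - Conditionally on $X$, the noise $Z$ is independent of $Y$ and has a distribution symmetric about $0$. The distribution of $Z$ may depend on $X$. - For every $x$, the conditional distribution of $Y\mid X=x$ has a density that is symmetric about some point and unimodal. - For every $x\in\mathcal X$, the set $\widehat{\mathcal C}_{\rm noisy}(x)$ is an interval that contains the median of $\tilde Y\mid X=x$. Then $\mathbb{P}\big(Y_{\rm test}\in\widehat{\mathcal C}_{\rm noisy}(X_{\rm test})\big)\ge 1-\alpha$.
   Context: Setting (conformal prediction with noisy labels). Let $(X_1,Y_1,U_1),\dots,(X_n,Y_n,U_n),(X_{\rm test},Y_{\rm test},U_{\rm test})$ be i.i.d. triples, with $U\sim\mathrm{Unif}[0,1]$ independent of $(X,Y)$. Noisy labels are $\tilde Y_i=g(Y_i,U_i)$ and $\tilde Y_{\rm test}=g(Y_{\rm test},U_{\rm test})$ for a corruption function $g$. Here the corruption is additive: $\tilde Y=Y+Z$, where the noise $Z$ is generated from $U$ (and possibly $X$). Fix a data-independent score $s:\mathcal X\times\mathcal Y\to\mathbb R$ and a level $\alpha\in(0,1)$. Let $\hat q_{\rm noisy}$ be the $\lceil (n+1)(1-\alpha)\rceil$-th smallest of $s(X_i,\tilde Y_i)$, $i=1,\dots,n$, with $\hat q_{\rm noisy}=+\infty$ if this index exceeds $n$. Set $\widehat{\mathcal C}_{\rm noisy}(x)=\{y: s(x,y)\le\hat q_{\rm noisy}\}$. Probabilities are joint over all data and corruption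 randomness. *)

theory Defs
  imports "HOL-Probability.Probability"
begin

definition unifU :: "real measure" where
  "unifU = uniform_measure lborel {0..1}"

definition XY_law :: "'a measure \<Rightarrow> ('a \<Rightarrow> real \<Rightarrow> real) \<Rightarrow> ('a \<times> real) measure" where
  "XY_law mu f = density (mu \<Otimes>\<^sub>M lborel) (\<lambda>(x,y). ennreal (f x y))"

definition triple_law :: "'a measure \<Rightarrow> ('a \<Rightarrow> real \<Rightarrow> real) \<Rightarrow> (('a \<times> real) \<times> real) measure" where
  "triple_law mu f = XY_law mu f \<Otimes>\<^sub>M unifU"

text \<open>Joint law of the n calibration triples (indices 0..n-1) and the test triple (index n), i.i.d.\<close>
definition data_law :: "nat \<Rightarrow> 'a measure \<Rightarrow> ('a \<Rightarrow> real \<Rightarrow> real)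
    \<Rightarrow> (nat \<Rightarrow> ('a \<times> real) \<times> real) measure" where
  "data_law n mu f = PiM {..n} (\<lambda>_. triple_law mu f)"

definition Xof :: "(nat \<Rightarrow> ('a \<times> real) \<times> real) \<Rightarrow> nat \<Rightarrow> 'a" where
  "Xof \<omega> i = fst (fst (\<omega> i))"
definition Yof :: "(nat \<Rightarrow> ('a \<times> real) \<times> real) \<Rightarrow> nat \<Rightarrow> real" where
  "Yof \<omega> i = snd (fst (\<omega> i))"
definition Uof :: "(nat \<Rightarrow> ('a \<times> real) \<times> real) \<Rightarrow> nat \<Rightarrow> real" where
  "Uof \<omega> i = snd (\<omega> i)"

text \<open>Additive corruption: noisy label Y + Z with Z = h X U.\<close>
definition Ytil :: "('a \<Rightarrow> real \<Rightarrow> real) \<Rightarrow> (nat \<Rightarrow> ('a \<times> real) \<times> real) \<Rightarrow> nat \<Rightarrow> real" where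
  "Ytil h \<omega> i = Yof \<omega> i + h (Xof \<omega> i) (Uof \<omega> i)"

definition conf_quantile :: "nat \<Rightarrow> real \<Rightarrow> (nat \<Rightarrow> real) \<Rightarrow> ereal" where
  "conf_quantile n \<alpha> v =
     (let k = nat \<lceil>(real n + 1) * (1 - \<alpha>)\<rceil>
      in if k > n then \<infinity> else ereal (sort (map v [0..<n]) ! (k - 1)))"

definition q_noisy :: "nat \<Rightarrow> real \<Rightarrow> ('a \<Rightarrow> real \<Rightarrow> real) \<Rightarrow> ('a \<Rightarrow> real \<Rightarrow> real)
    \<Rightarrow> (nat \<Rightarrow> ('a \<times> real) \<times> real) \<Rightarrow> ereal" where
  "q_noisy n \<alpha> s h \<omega> = conf_quantile n \<alpha> (\<lambda>i. s (Xof \<omega> i) (Ytil h \<omega> i))"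

definition C_noisy :: "nat \<Rightarrow> real \<Rightarrow> ('a \<Rightarrow> real \<Rightarrow> real) \<Rightarrow> ('a \<Rightarrow> real \<Rightarrow> real)
    \<Rightarrow> (nat \<Rightarrow> ('a \<times> real) \<times> real) \<Rightarrow> 'a \<Rightarrow> real set" where
  "C_noisy n \<alpha> s h \<omega> x = {y. ereal (s x y) \<le> q_noisy n \<alpha> s h \<omega>}"

definition noisy_cond_law :: "('a \<Rightarrow> real \<Rightarrow> real) \<Rightarrow> ('a \<Rightarrow> real \<Rightarrow> real) \<Rightarrow> 'a \<Rightarrow> real measure" where
  "noisy_cond_law f h x =
     distr (density lborel (\<lambda>y. ennreal (f x y)) \<Otimes>\<^sub>M unifU) borel (\<lambda>(y,u). y + h x u)"

definition is_median :: "real measure \<Rightarrow> real \<Rightarrow> bool" where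
  "is_median M t \<longleftrightarrow> measure M {..t} \<ge> 1/2 \<and> measure M {t..} \<ge> 1/2"

definition sym_unimodal :: "(real \<Rightarrow> real) \<Rightarrow> bool" where
  "sym_unimodal g \<longleftrightarrow> (\<exists>m. (\<forall>t. g (m + t) = g (m - t)) \<and> mono_on {..m} g \<and> antimono_on {m..} g)"

end

theory Submission
  imports Defs
begin


lemma aff_int:
  fixes F :: "real \<Rightarrow> ennreal"
  assumes "F \<in> borel_measurable borel"
  shows "(\<integral>\<^sup>+y. F y \<partial>lborel) = (\<integral>\<^sup>+y. F (t - y) \<partial>lborel)"
  using nn_integral_real_affine[OF assms, of "-1::real" "t"] by simp

lemma refl_int:
  fixes F :: "real \<Rightarrow> ennreal"
  assumes "F \<in> borel_measurable borel"
  shows "(\<integral>\<^sup>+y. F y \<partial>lborel) = (\<integral>\<^sup>+y. F (2*m - y) \<partial>lborel)"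
  by (rule aff_int[OF assms])

lemma core_K:
  fixes g :: "real \<Rightarrow> real" and m z :: real and K :: "real set"
  assumes gm: "g \<in> borel_measurable borel" and g0: "\<And>y. 0 \<le> g y"
   and sym: "\<And>t. g (m + t) = g (m - t)" and mono: "mono_on {..m} g"
   and Km: "K \<in> sets borel" and Kint: "is_interval K" and Ksym: "\<And>y. y \<in> K \<longleftrightarrow> 2*m - y \<in> K"
   and z: "0 \<le> z"
  shows "(\<integral>\<^sup>+y. ennreal (g y) * indicator K (y + z) \<partial>lborel) \<le> (\<integral>\<^sup>+y. ennreal (g y) * indicator K y \<partial>lborel)"
proof -
  have [measurable]: "g \<in> borel_measurable borel" "K \<in> sets borel" using gm Km by auto
  have Kc: "- K \<in> sets borel" using Km by auto
  have pt: "g y \<le> g (2*m - z - y)" if y1: "y + z \<in> K" and y2: "y \<notin> K" for y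
  proof -
    have r: "2*m - (y+z) \<in> K" using y1 Ksym by blast
    have mK: "m \<in> K"
      using Kint y1 r unfolding is_interval_1
      by (smt (verit))
    have ym: "y < m"
    proof (rule ccontr)
      assume "\<not> y < m"
      then have "m \<le> y" "y \<le> y + z" using z by auto
      then have "y \<in> K" using Kint mK y1 unfolding is_interval_1 by blast
      then show False using y2 by simp
    qed
    show ?thesis
    proof (cases "y + z \<le> m")
      case True
      have "g y \<le> g (y + z)" using mono True ym z unfolding mono_on_def by auto
      also have "g (y+z) = g (2*m - z - y)" using sym[of "y + z - m"] by (simp add: algebra_simps)
      finally show ?thesis .
    next
      case False
      have "y \<le> 2*m - z - y"
      proof (rule ccontr)
        assume "\<not> y \<le> 2*m - z - y"
        then have "y \<in> K" using Kint r mK ym unfolding is_interval_1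
          by (smt (verit))
        then show False using y2 by simp
      qed
      then show ?thesis using mono False unfolding mono_on_def by auto
    qed
  qed
  have e1: "(\<integral>\<^sup>+y. ennreal (g y) * indicator K (y + z) \<partial>lborel) =
    (\<integral>\<^sup>+y. ennreal (g y) * indicator K (y + z) * indicator K y + ennreal (g y) * indicator K (y + z) * indicator (-K) y \<partial>lborel)"
    by (intro nn_integral_cong) (auto simp: indicator_def)
  also have "\<dots> = (\<integral>\<^sup>+y. ennreal (g y) * indicator K (y + z) * indicator K y \<partial>lborel) +
       (\<integral>\<^sup>+y. ennreal (g y) * indicator K (y + z) * indicator (-K) y \<partial>lborel)"
    using Kc by (intro nn_integral_add) auto
  also have "(\<integral>\<^sup>+y. ennreal (g y) * indicator K (y + z) * indicator (-K) y \<partial>lborel) \<le>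
      (\<integral>\<^sup>+y. ennreal (g (2*m - z - y)) * indicator K (y + z) * indicator (-K) y \<partial>lborel)"
    by (intro nn_integral_mono) (auto simp: indicator_def pt ennreal_leI)
  also have "(\<integral>\<^sup>+y. ennreal (g (2*m - z - y)) * indicator K (y + z) * indicator (-K) y \<partial>lborel)
      = (\<integral>\<^sup>+y. ennreal (g y) * indicator K y * indicator (-K) (y + z) \<partial>lborel)"
  proof -
    have aff: "\<And>F. F \<in> borel_measurable borel \<Longrightarrow> (\<integral>\<^sup>+y. F y \<partial>lborel) = (\<integral>\<^sup>+y. F (2*m - z - y) \<partial>lborel)"
      by (rule aff_int)
    have "(\<integral>\<^sup>+y. ennreal (g y) * indicator K y * indicator (-K) (y + z) \<partial>lborel)
       = (\<integral>\<^sup>+y. ennreal (g (2*m - z - y)) * indicator K (2*m - z - y) * indicator (-K) ((2*m - z - y) + z) \<partial>lborel)"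
      using Kc by (intro aff) auto
    also have "\<dots> = (\<integral>\<^sup>+y. ennreal (g (2*m - z - y)) * indicator K (y + z) * indicator (-K) y \<partial>lborel)"
    proof -
      have "\<And>y. indicator K (2*m - z - y) = (indicator K (y + z) :: ennreal)"
        using Ksym by (auto simp: indicator_def algebra_simps)
      moreover have "\<And>y. indicator (-K) ((2*m - z - y) + z) = (indicator (-K) y :: ennreal)"
        using Ksym by (auto simp: indicator_def algebra_simps)
      ultimately show ?thesis by simp
    qed
    finally show ?thesis by simp
  qed
  finally have "(\<integral>\<^sup>+y. ennreal (g y) * indicator K (y + z) \<partial>lborel) \<le>
     (\<integral>\<^sup>+y. ennreal (g y) * indicator K (y + z) * indicator K y \<partial>lborel) + (\<integral>\<^sup>+y. ennreal (g y) * indicator K y * indicator (-K) (y + z) \<partial>lborel)"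
    by (simp add: add_left_mono)
  also have "\<dots> = (\<integral>\<^sup>+y. ennreal (g y) * indicator K (y + z) * indicator K y + ennreal (g y) * indicator K y * indicator (-K) (y + z) \<partial>lborel)"
    using Kc by (intro nn_integral_add[symmetric]) auto
  also have "\<dots> = (\<integral>\<^sup>+y. ennreal (g y) * indicator K y \<partial>lborel)"
    by (intro nn_integral_cong) (auto simp: indicator_def)
  finally show ?thesis .
qed


lemma core_K2:
  fixes g :: "real \<Rightarrow> real" and m z :: real and K :: "real set"
  assumes gm: "g \<in> borel_measurable borel" and g0: "\<And>y. 0 \<le> g y"
   and sym: "\<And>t. g (m + t) = g (m - t)" and mono: "mono_on {..m} g"
   and Km: "K \<in> sets borel" and Kint: "is_interval K" and Ksym: "\<And>y. y \<in> K \<longleftrightarrow> 2*m - y \<in> K"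
  shows "(\<integral>\<^sup>+y. ennreal (g y) * indicator K (y + z) \<partial>lborel) \<le> (\<integral>\<^sup>+y. ennreal (g y) * indicator K y \<partial>lborel)"
proof (cases "0 \<le> z")
  case True then show ?thesis using core_K[OF assms] by blast
next
  case False
  have [measurable]: "g \<in> borel_measurable borel" "K \<in> sets borel" using gm Km by auto
  have gs: "\<And>y. g (2*m - y) = g y" proof -
    fix y
    have "2*m - y = m + (m - y)" by simp
    then show "g (2*m - y) = g y" using sym[of "m - y"] by simp
  qed
  have "(\<integral>\<^sup>+y. ennreal (g y) * indicator K (y + z) \<partial>lborel) = (\<integral>\<^sup>+y. ennreal (g (2*m-y)) * indicator K ((2*m-y) + z) \<partial>lborel)"
    by (rule refl_int) measurable
  also have "\<dots> = (\<integral>\<^sup>+y. ennreal (g y) * indicator K (y + (-z)) \<partial>lborel)"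
  proof -
    have "\<And>y. indicator K ((2*m-y) + z) = (indicator K (y + (-z)) :: ennreal)"
    proof -
      fix y
      have e: "2*m - (2*m - y + z) = y + (-z)" by simp
      show "indicator K ((2*m-y) + z) = (indicator K (y + (-z)) :: ennreal)"
        using Ksym[of "2*m - y + z"] unfolding e by (simp add: indicator_def)
    qed
    then show ?thesis by (simp add: gs)
  qed
  also have "\<dots> \<le> (\<integral>\<^sup>+y. ennreal (g y) * indicator K y \<partial>lborel)"
    using False by (intro core_K[OF assms]) auto
  finally show ?thesis .
qed

lemma core_I:
  fixes g :: "real \<Rightarrow> real" and m z :: real and I :: "real set"
  assumes gm: "g \<in> borel_measurable borel" and g0: "\<And>y. 0 \<le> g y"
   and sym: "\<And>t. g (m + t) = g (m - t)" and mono: "mono_on {..m} g"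
   and Im: "I \<in> sets borel" and Iint: "is_interval I" and mI: "m \<in> I"
  shows "(\<integral>\<^sup>+y. ennreal (g y) * indicator I (y + z) \<partial>lborel) + (\<integral>\<^sup>+y. ennreal (g y) * indicator I (y - z) \<partial>lborel)
     \<le> 2 * (\<integral>\<^sup>+y. ennreal (g y) * indicator I y \<partial>lborel)"
proof -
  define J where "J = {w. 2*m - w \<in> I}"
  define K where "K = I \<inter> J"
  define L where "L = I \<union> J"
  have [measurable]: "g \<in> borel_measurable borel" "I \<in> sets borel" using gm Im by auto
  have Jm[measurable]: "J \<in> sets borel"
  proof -
    have "(\<lambda>w::real. 2*m - w) \<in> borel_measurable borel" by simp
    from measurable_sets[OF this Im] show ?thesis by (simp add: J_def vimage_def)
  qed
  have Km[measurable]: "K \<in> sets borel" "L \<in> sets borel" unfolding K_def L_def by auto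
  have gs: "\<And>y. g (2*m - y) = g y" proof -
    fix y
    have "2*m - y = m + (m - y)" by simp
    then show "g (2*m - y) = g y" using sym[of "m - y"] by simp
  qed
  have Jint: "is_interval J" unfolding is_interval_1
  proof (intro ballI allI impI)
    fix a b x assume a: "a \<in> J" and b: "b \<in> J" and x: "a \<le> x \<and> x \<le> b"
    then have "2*m - b \<le> 2*m - x" "2*m-x \<le> 2*m - a" "2*m - a \<in> I" "2*m - b \<in> I" by (auto simp: J_def)
    then have "2*m - x \<in> I" using Iint unfolding is_interval_1 by blast
    then show "x \<in> J" by (simp add: J_def)
  qed
  have mJ: "m \<in> J" using mI by (simp add: J_def)
  have Kint: "is_interval K" unfolding K_def using Iint Jint by (rule is_interval_Int)
  have iI: "\<And>a b x. a \<in> I \<Longrightarrow> b \<in> I \<Longrightarrow> a \<le> x \<Longrightarrow> x \<le> b \<Longrightarrow> x \<in> I"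
    using Iint unfolding is_interval_1 by blast
  have iJ: "\<And>a b x. a \<in> J \<Longrightarrow> b \<in> J \<Longrightarrow> a \<le> x \<Longrightarrow> x \<le> b \<Longrightarrow> x \<in> J"
    using Jint unfolding is_interval_1 by blast
  have Lint: "is_interval L" unfolding is_interval_1
  proof (intro ballI allI impI)
    fix a b x assume a: "a \<in> L" and b: "b \<in> L" and x: "a \<le> x \<and> x \<le> b"
    show "x \<in> L"
    proof (cases "x \<le> m")
      case True
      show ?thesis
      proof (cases "a \<in> I")
        case True
        then show ?thesis using iI[OF True mI] x \<open>x \<le> m\<close> by (simp add: L_def)
      next
        case False
        then have "a \<in> J" using a by (simp add: L_def)
        then show ?thesis using iJ[OF _ mJ] x \<open>x \<le> m\<close> by (simp add: L_def)
      qed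
    next
      case False
      show ?thesis
      proof (cases "b \<in> I")
        case True
        then show ?thesis using iI[OF mI True] x \<open>\<not> x \<le> m\<close> by (simp add: L_def)
      next
        case False
        then have "b \<in> J" using b by (simp add: L_def)
        then show ?thesis using iJ[OF mJ] x \<open>\<not> x \<le> m\<close> by (simp add: L_def)
      qed
    qed
  qed
  have Ks: "\<And>y. y \<in> K \<longleftrightarrow> 2*m - y \<in> K" "\<And>y. y \<in> L \<longleftrightarrow> 2*m - y \<in> L"
  proof -
    fix y
    have e: "2*m - (2*m - y) = y" by simp
    show "y \<in> K \<longleftrightarrow> 2*m - y \<in> K" by (simp only: K_def J_def mem_Collect_eq Int_iff e) blast
    show "y \<in> L \<longleftrightarrow> 2*m - y \<in> L" by (simp only: L_def J_def mem_Collect_eq Un_iff e) blast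
  qed
  have e1: "(\<integral>\<^sup>+y. ennreal (g y) * indicator I (y - z) \<partial>lborel) = (\<integral>\<^sup>+y. ennreal (g y) * indicator J (y + z) \<partial>lborel)"
  proof -
    have "(\<integral>\<^sup>+y. ennreal (g y) * indicator I (y - z) \<partial>lborel) = (\<integral>\<^sup>+y. ennreal (g (2*m-y)) * indicator I ((2*m-y) - z) \<partial>lborel)"
      by (rule refl_int) measurable
    also have "\<dots> = (\<integral>\<^sup>+y. ennreal (g y) * indicator J (y + z) \<partial>lborel)"
    proof -
      have "\<And>y. indicator I ((2*m-y) - z) = (indicator J (y + z) :: ennreal)"
        unfolding indicator_def J_def mem_Collect_eq by (simp add: diff_diff_eq)
      then show ?thesis by (simp add: gs)
    qed
    finally show ?thesis .
  qed
  have e2: "(\<integral>\<^sup>+y. ennreal (g y) * indicator J y \<partial>lborel) = (\<integral>\<^sup>+y. ennreal (g y) * indicator I y \<partial>lborel)"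
  proof -
    have "(\<integral>\<^sup>+y. ennreal (g y) * indicator J y \<partial>lborel) = (\<integral>\<^sup>+y. ennreal (g (2*m-y)) * indicator J (2*m-y) \<partial>lborel)"
      by (rule refl_int) measurable
    also have "\<dots> = (\<integral>\<^sup>+y. ennreal (g y) * indicator I y \<partial>lborel)"
    proof -
      have "\<And>y. indicator J (2*m-y) = (indicator I y :: ennreal)"
        unfolding indicator_def J_def mem_Collect_eq by simp
      then show ?thesis by (simp add: gs)
    qed
    finally show ?thesis .
  qed
  have "(\<integral>\<^sup>+y. ennreal (g y) * indicator I (y + z) \<partial>lborel) + (\<integral>\<^sup>+y. ennreal (g y) * indicator I (y - z) \<partial>lborel)
     = (\<integral>\<^sup>+y. ennreal (g y) * indicator I (y + z) + ennreal (g y) * indicator J (y + z) \<partial>lborel)"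
    unfolding e1 by (intro nn_integral_add[symmetric]) auto
  also have "\<dots> = (\<integral>\<^sup>+y. ennreal (g y) * indicator K (y + z) + ennreal (g y) * indicator L (y + z) \<partial>lborel)"
    by (intro nn_integral_cong) (auto simp: indicator_def K_def L_def)
  also have "\<dots> = (\<integral>\<^sup>+y. ennreal (g y) * indicator K (y + z) \<partial>lborel) + (\<integral>\<^sup>+y. ennreal (g y) * indicator L (y + z) \<partial>lborel)"
    by (intro nn_integral_add) auto
  also have "\<dots> \<le> (\<integral>\<^sup>+y. ennreal (g y) * indicator K y \<partial>lborel) + (\<integral>\<^sup>+y. ennreal (g y) * indicator L y \<partial>lborel)"
    using core_K2[OF gm g0 sym mono Km(1) Kint Ks(1), of z] core_K2[OF gm g0 sym mono Km(2) Lint Ks(2), of z]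
    by (rule add_mono)
  also have "\<dots> = (\<integral>\<^sup>+y. ennreal (g y) * indicator K y + ennreal (g y) * indicator L y \<partial>lborel)"
    by (intro nn_integral_add[symmetric]) auto
  also have "\<dots> = (\<integral>\<^sup>+y. ennreal (g y) * indicator I y + ennreal (g y) * indicator J y \<partial>lborel)"
    by (intro nn_integral_cong) (auto simp: indicator_def K_def L_def)
  also have "\<dots> = (\<integral>\<^sup>+y. ennreal (g y) * indicator I y \<partial>lborel) + (\<integral>\<^sup>+y. ennreal (g y) * indicator J y \<partial>lborel)"
    by (intro nn_integral_add) auto
  also have "\<dots> = 2 * (\<integral>\<^sup>+y. ennreal (g y) * indicator I y \<partial>lborel)"
    unfolding e2 by (simp add: mult_2)
  finally show ?thesis .
qed



lemma unifU_prob: "prob_space unifU"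
  unfolding unifU_def by (rule prob_space_uniform_measure) auto

lemma sets_unifU[simp, measurable_cong]: "sets unifU = sets borel"
  unfolding unifU_def by simp

lemma space_unifU[simp]: "space unifU = UNIV"
  unfolding unifU_def by simp

lemma meas_unifU: "H \<in> borel_measurable borel \<Longrightarrow> H \<in> borel_measurable unifU"
  using measurable_cong_sets[OF sets_unifU refl] by simp

lemma sym_int:
  fixes H :: "real \<Rightarrow> real" and \<Phi> :: "real \<Rightarrow> ennreal"
  assumes H: "H \<in> borel_measurable borel" and S: "distr unifU borel H = distr unifU borel (\<lambda>u. - H u)"
    and P: "\<Phi> \<in> borel_measurable borel"
  shows "(\<integral>\<^sup>+u. \<Phi> (H u) \<partial>unifU) = (\<integral>\<^sup>+u. \<Phi> (- H u) \<partial>unifU)"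
proof -
  have H1: "H \<in> measurable unifU borel" using meas_unifU[OF H] .
  have H2: "(\<lambda>u. - H u) \<in> measurable unifU borel" using meas_unifU H by simp
  have "(\<integral>\<^sup>+u. \<Phi> (H u) \<partial>unifU) = (\<integral>\<^sup>+z. \<Phi> z \<partial>distr unifU borel H)"
    using H1 P by (simp add: nn_integral_distr)
  also have "\<dots> = (\<integral>\<^sup>+z. \<Phi> z \<partial>distr unifU borel (\<lambda>u. - H u))" by (simp add: S)
  also have "\<dots> = (\<integral>\<^sup>+u. \<Phi> (- H u) \<partial>unifU)"
    using H2 P by (simp add: nn_integral_distr)
  finally show ?thesis .
qed

lemma Phi_meas:
  fixes g :: "real \<Rightarrow> real" and I :: "real set"
  assumes [measurable]: "g \<in> borel_measurable borel" "I \<in> sets borel"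
  shows "(\<lambda>z. \<integral>\<^sup>+y. ennreal (g y) * indicator I (y + z) \<partial>lborel) \<in> borel_measurable borel"
  by measurable

lemma noise_avg:
  fixes g :: "real \<Rightarrow> real" and m :: real and I :: "real set" and H :: "real \<Rightarrow> real"
  assumes gm: "g \<in> borel_measurable borel" and g0: "\<And>y. 0 \<le> g y"
   and sym: "\<And>t. g (m + t) = g (m - t)" and mono: "mono_on {..m} g"
   and Im: "I \<in> sets borel" and Iint: "is_interval I" and mI: "m \<in> I"
   and H: "H \<in> borel_measurable borel" and S: "distr unifU borel H = distr unifU borel (\<lambda>u. - H u)"
  shows "(\<integral>\<^sup>+u. (\<integral>\<^sup>+y. ennreal (g y) * indicator I (y + H u) \<partial>lborel) \<partial>unifU) \<le> (\<integral>\<^sup>+y. ennreal (g y) * indicator I y \<partial>lborel)"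
proof -
  interpret U: prob_space unifU by (rule unifU_prob)
  define \<Phi> where "\<Phi> = (\<lambda>z. \<integral>\<^sup>+y. ennreal (g y) * indicator I (y + z) \<partial>lborel)"
  define \<Psi> where "\<Psi> = (\<integral>\<^sup>+y. ennreal (g y) * indicator I y \<partial>lborel)"
  have Pm: "\<Phi> \<in> borel_measurable borel" unfolding \<Phi>_def by (rule Phi_meas[OF gm Im])
  have [measurable]: "H \<in> borel_measurable unifU" by (rule meas_unifU[OF H])
  have Pm2[measurable]: "(\<lambda>u. \<Phi> (H u)) \<in> borel_measurable unifU" "(\<lambda>u. \<Phi> (- H u)) \<in> borel_measurable unifU"
    using measurable_comp[OF meas_unifU[OF H] Pm] measurable_comp[OF meas_unifU[of "\<lambda>u. - H u"] Pm] H
    by (auto simp: comp_def)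
  have pt: "\<Phi> z + \<Phi> (- z) \<le> 2 * \<Psi>" for z
    using core_I[OF gm g0 sym mono Im Iint mI, of z] unfolding \<Phi>_def \<Psi>_def by simp
  have "2 * (\<integral>\<^sup>+u. \<Phi> (H u) \<partial>unifU) = (\<integral>\<^sup>+u. \<Phi> (H u) \<partial>unifU) + (\<integral>\<^sup>+u. \<Phi> (- H u) \<partial>unifU)"
    using sym_int[OF H S Pm] by (simp add: mult_2)
  also have "\<dots> = (\<integral>\<^sup>+u. \<Phi> (H u) + \<Phi> (- H u) \<partial>unifU)"
    by (rule nn_integral_add[symmetric]) (use Pm2 in auto)
  also have "\<dots> \<le> (\<integral>\<^sup>+u. 2 * \<Psi> \<partial>unifU)"
    by (rule nn_integral_mono) (rule pt)
  also have "\<dots> = 2 * \<Psi>" using U.emeasure_space_1 by simp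
  finally have "2 * (\<integral>\<^sup>+u. \<Phi> (H u) \<partial>unifU) \<le> 2 * \<Psi>" .
  then have "(\<integral>\<^sup>+u. \<Phi> (H u) \<partial>unifU) \<le> \<Psi>"
    by (subst (asm) ennreal_mult_le_mult_iff) auto
  then show ?thesis unfolding \<Phi>_def \<Psi>_def .
qed

lemma density_prob:
  fixes g :: "real \<Rightarrow> real"
  assumes gm: "g \<in> borel_measurable borel" and gint: "(\<integral>\<^sup>+y. ennreal (g y) \<partial>lborel) = 1"
  shows "prob_space (density lborel (\<lambda>y. ennreal (g y)))"
proof (rule prob_spaceI)
  show "emeasure (density lborel (\<lambda>y. ennreal (g y))) (space (density lborel (\<lambda>y. ennreal (g y)))) = 1"
    using gm gint by (simp add: emeasure_density)
qed

lemma noisy_emeasure: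
  fixes g :: "real \<Rightarrow> real" and H :: "real \<Rightarrow> real"
  assumes gm: "g \<in> borel_measurable borel" and gint: "(\<integral>\<^sup>+y. ennreal (g y) \<partial>lborel) = 1"
    and H: "H \<in> borel_measurable borel" and S: "S \<in> sets borel"
  shows "emeasure (distr (density lborel (\<lambda>y. ennreal (g y)) \<Otimes>\<^sub>M unifU) borel (\<lambda>(y,u). y + H u)) S
    = (\<integral>\<^sup>+u. (\<integral>\<^sup>+y. ennreal (g y) * indicator S (y + H u) \<partial>lborel) \<partial>unifU)"
proof -
  let ?D = "density lborel (\<lambda>y. ennreal (g y))"
  interpret D: prob_space ?D by (rule density_prob[OF gm gint])
  interpret U: prob_space unifU by (rule unifU_prob)
  interpret P: pair_sigma_finite ?D unifU by unfold_locales
  have [measurable]: "g \<in> borel_measurable borel" "H \<in> borel_measurable borel" "S \<in> sets borel" using gm H S by auto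
  have Fm: "(\<lambda>(y,u). y + H u) \<in> measurable (?D \<Otimes>\<^sub>M unifU) borel"
    by measurable
  have "emeasure (distr (?D \<Otimes>\<^sub>M unifU) borel (\<lambda>(y,u). y + H u)) S
     = (\<integral>\<^sup>+p. indicator S ((\<lambda>(y,u). y + H u) p) \<partial>(?D \<Otimes>\<^sub>M unifU))"
  proof -
    have "emeasure (distr (?D \<Otimes>\<^sub>M unifU) borel (\<lambda>(y,u). y + H u)) S
       = (\<integral>\<^sup>+z. indicator S z \<partial>distr (?D \<Otimes>\<^sub>M unifU) borel (\<lambda>(y,u). y + H u))"
      using S by (simp add: nn_integral_indicator)
    also have "\<dots> = (\<integral>\<^sup>+p. indicator S ((\<lambda>(y,u). y + H u) p) \<partial>(?D \<Otimes>\<^sub>M unifU))"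
      by (rule nn_integral_distr[OF Fm]) simp
    finally show ?thesis .
  qed
  also have "\<dots> = (\<integral>\<^sup>+u. (\<integral>\<^sup>+y. indicator S (y + H u) \<partial>?D) \<partial>unifU)"
    apply (subst P.nn_integral_snd[symmetric])
     apply measurable
    done
  also have "\<dots> = (\<integral>\<^sup>+u. (\<integral>\<^sup>+y. ennreal (g y) * indicator S (y + H u) \<partial>lborel) \<partial>unifU)"
    by (intro nn_integral_cong) (simp add: nn_integral_density)
  finally show ?thesis .
qed

lemma median_lemma:
  fixes g :: "real \<Rightarrow> real" and m :: real and H :: "real \<Rightarrow> real"
  assumes gm: "g \<in> borel_measurable borel" and g0: "\<And>y. 0 \<le> g y"
   and sym: "\<And>t. g (m + t) = g (m - t)"
   and gint: "(\<integral>\<^sup>+y. ennreal (g y) \<partial>lborel) = 1"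
   and H: "H \<in> borel_measurable borel" and S: "distr unifU borel H = distr unifU borel (\<lambda>u. - H u)"
  shows "is_median (distr (density lborel (\<lambda>y. ennreal (g y)) \<Otimes>\<^sub>M unifU) borel (\<lambda>(y,u). y + H u)) m"
proof -
  let ?N = "distr (density lborel (\<lambda>y. ennreal (g y)) \<Otimes>\<^sub>M unifU) borel (\<lambda>(y,u). y + H u)"
  have [measurable]: "g \<in> borel_measurable borel" "H \<in> borel_measurable borel" using gm H by auto
  have gs: "\<And>y. g (2*m - y) = g y"
  proof -
    fix y
    have "2*m - y = m + (m - y)" by simp
    then show "g (2*m - y) = g y" using sym[of "m - y"] by simp
  qed
  interpret D: prob_space "density lborel (\<lambda>y. ennreal (g y))" by (rule density_prob[OF gm gint])
  interpret U: prob_space unifU by (rule unifU_prob)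
  interpret N: prob_space ?N
    by (rule prob_space.prob_space_distr[OF prob_space_pair[OF D.prob_space_axioms U.prob_space_axioms]]) measurable
  define \<Phi>1 where "\<Phi>1 = (\<lambda>z. \<integral>\<^sup>+y. ennreal (g y) * indicator {..m} (y + z) \<partial>lborel)"
  define \<Phi>2 where "\<Phi>2 = (\<lambda>z. \<integral>\<^sup>+y. ennreal (g y) * indicator {m..} (y + z) \<partial>lborel)"
  have P1: "\<Phi>2 \<in> borel_measurable borel" unfolding \<Phi>2_def by (rule Phi_meas) auto
  have e: "\<Phi>1 z = \<Phi>2 (- z)" for z
  proof -
    have "\<Phi>1 z = (\<integral>\<^sup>+y. ennreal (g (2*m-y)) * indicator {..m} ((2*m-y) + z) \<partial>lborel)"
      unfolding \<Phi>1_def by (rule refl_int) measurable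
    also have "\<dots> = \<Phi>2 (- z)"
      unfolding \<Phi>2_def gs by (intro nn_integral_cong) (simp add: indicator_def)
    finally show ?thesis .
  qed
  have "emeasure ?N {..m} = (\<integral>\<^sup>+u. \<Phi>1 (H u) \<partial>unifU)"
    unfolding \<Phi>1_def by (rule noisy_emeasure[OF gm gint H]) simp
  also have "\<dots> = (\<integral>\<^sup>+u. \<Phi>2 (- H u) \<partial>unifU)" by (simp add: e)
  also have "\<dots> = (\<integral>\<^sup>+u. \<Phi>2 (H u) \<partial>unifU)" by (rule sym_int[OF H S P1, symmetric])
  also have "\<dots> = emeasure ?N {m..}"
    unfolding \<Phi>2_def by (rule noisy_emeasure[OF gm gint H, symmetric]) simp
  finally have eq: "emeasure ?N {..m} = emeasure ?N {m..}" .
  then have eq2: "measure ?N {..m} = measure ?N {m..}" by (simp add: measure_def)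
  have "1 = measure ?N ({..m} \<union> {m..})"
  proof -
    have "{..m} \<union> {m..} = (UNIV::real set)" by auto
    then show ?thesis using N.prob_space by simp
  qed
  also have "\<dots> \<le> measure ?N {..m} + measure ?N {m..}" by (rule measure_Un_le) auto
  finally show ?thesis unfolding is_median_def using eq2 by simp
qed



lemma card_sum_real:
  assumes "finite A"
  shows "real (card {j\<in>A. P j}) = (\<Sum>j\<in>A. if P j then 1 else 0)"
proof -
  have "(\<Sum>j\<in>{j\<in>A. P j}. (1::real)) = (\<Sum>j\<in>A. if P j then 1 else 0)"
    using sum.inter_filter[OF assms, of "\<lambda>_. 1::real" P] by simp
  then show ?thesis by simp
qed

lemma sort_count:
  fixes V :: "nat \<Rightarrow> real"
  assumes k: "1 \<le> k" "k \<le> n"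
  shows "(sort (map V [0..<n]) ! (k-1) < v) \<longleftrightarrow> k \<le> card {j. j < n \<and> V j < v}"
proof -
  define xs where "xs = sort (map V [0..<n])"
  have len: "length xs = n" by (simp add: xs_def)
  have so: "sorted xs" by (simp add: xs_def)
  have c1: "card {j. j < n \<and> V j < v} = length (filter (\<lambda>a. a < v) (map V [0..<n]))"
  proof -
    have "{i. i < n \<and> map V [0..<n] ! i < v} = {j. j < n \<and> V j < v}" by auto
    then show ?thesis by (simp add: length_filter_conv_card)
  qed
  have c2: "length (filter (\<lambda>a. a < v) (map V [0..<n])) = length (filter (\<lambda>a. a < v) xs)"
  proof -
    have "mset (filter (\<lambda>a. a < v) xs) = mset (filter (\<lambda>a. a < v) (map V [0..<n]))"
      by (simp add: xs_def)
    then show ?thesis by (metis size_mset)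
  qed
  have c3: "length (filter (\<lambda>a. a < v) xs) = card {i. i < n \<and> xs ! i < v}"
    by (simp add: length_filter_conv_card len)
  have C: "card {j. j < n \<and> V j < v} = card {i. i < n \<and> xs ! i < v}" using c1 c2 c3 by simp
  show ?thesis
  proof
    assume lt: "sort (map V [0..<n]) ! (k-1) < v"
    have "{0..<k} \<subseteq> {i. i < n \<and> xs ! i < v}"
    proof
      fix i assume "i \<in> {0..<k}"
      then have i: "i \<le> k - 1" "i < n" using k by auto
      have "xs ! i \<le> xs ! (k-1)" using sorted_nth_mono[OF so i(1)] k len by auto
      then show "i \<in> {i. i < n \<and> xs ! i < v}" using lt i by (simp add: xs_def)
    qed
    then have "card {0..<k} \<le> card {i. i < n \<and> xs ! i < v}" by (intro card_mono) auto
    then show "k \<le> card {j. j < n \<and> V j < v}" using C by simp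
  next
    assume ge: "k \<le> card {j. j < n \<and> V j < v}"
    show "sort (map V [0..<n]) ! (k-1) < v"
    proof (rule ccontr)
      assume "\<not> sort (map V [0..<n]) ! (k-1) < v"
      then have nv: "v \<le> xs ! (k-1)" by (simp add: xs_def)
      have "{i. i < n \<and> xs ! i < v} \<subseteq> {0..<k-1}"
      proof
        fix i assume i: "i \<in> {i. i < n \<and> xs ! i < v}"
        show "i \<in> {0..<k-1}"
        proof (rule ccontr)
          assume "i \<notin> {0..<k-1}"
          then have "k - 1 \<le> i" by auto
          then have "xs ! (k-1) \<le> xs ! i" using sorted_nth_mono[OF so] i len by auto
          then show False using i nv by auto
        qed
      qed
      then have "card {i. i < n \<and> xs ! i < v} \<le> card {0..<k-1}" by (intro card_mono) auto
      then show False using ge C k by simp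
    qed
  qed
qed

lemma quant_iff:
  assumes k: "k = nat \<lceil>(real n + 1) * (1 - \<alpha>)\<rceil>" and kn: "k \<le> n" and a: "\<alpha> < 1"
  shows "(ereal v \<le> conf_quantile n \<alpha> V) \<longleftrightarrow> card {j. j < n \<and> V j < v} < k"
proof -
  have k1: "1 \<le> k"
  proof -
    have "0 < (real n + 1) * (1 - \<alpha>)" using a by simp
    then show ?thesis unfolding k by linarith
  qed
  have "conf_quantile n \<alpha> V = ereal (sort (map V [0..<n]) ! (k-1))"
    unfolding conf_quantile_def Let_def k[symmetric] using kn by simp
  then show ?thesis using sort_count[OF k1 kn, of V v] by auto
qed

lemma quant_inf:
  assumes k: "k = nat \<lceil>(real n + 1) * (1 - \<alpha>)\<rceil>" and kn: "\<not> k \<le> n"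
  shows "conf_quantile n \<alpha> V = \<infinity>"
  unfolding conf_quantile_def Let_def k[symmetric] using kn by simp

lemma comb:
  fixes V :: "nat \<Rightarrow> real"
  assumes fin: "finite I" and k: "k \<le> card I"
  shows "card {i\<in>I. k \<le> card {j\<in>I. V j < V i}} + k \<le> card I"
proof (cases "{i\<in>I. k \<le> card {j\<in>I. V j < V i}} = {}")
  case True
  then have "card {i\<in>I. k \<le> card {j\<in>I. V j < V i}} = 0" by (simp only: card.empty)
  then show ?thesis using k by simp
next
  case False
  define A where "A = {i\<in>I. k \<le> card {j\<in>I. V j < V i}}"
  have finA: "finite A" using fin by (simp add: A_def)
  obtain i0 where i0: "i0 \<in> A" "\<And>i. i \<in> A \<Longrightarrow> V i0 \<le> V i"
    using False finA unfolding A_def[symmetric]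
    by (metis (no_types, lifting) arg_min_if_finite(1) arg_min_least)
  define L where "L = {j\<in>I. V j < V i0}"
  have kL: "k \<le> card L" using i0(1) by (simp add: A_def L_def)
  have disj: "A \<inter> L = {}" using i0(2) by (force simp: L_def)
  have sub: "A \<union> L \<subseteq> I" by (auto simp: A_def L_def)
  have "card A + card L = card (A \<union> L)"
    using disj fin by (intro card_Un_disjoint[symmetric]) (auto simp: A_def L_def)
  also have "\<dots> \<le> card I" using sub fin by (rule card_mono[rotated])
  finally show ?thesis using kL unfolding A_def by simp
qed



lemma exch:
  fixes T :: "'b measure" and W :: "'b \<Rightarrow> real"
  assumes T: "prob_space T" and Wm: "W \<in> borel_measurable T" and kn: "k \<le> n + 1"
  shows "real (n+1) * measure (PiM {..n} (\<lambda>_. T)) {\<omega> \<in> space (PiM {..n} (\<lambda>_. T)). k \<le> card {j. j < n \<and> W (\<omega> j) < W (\<omega> n)}}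
     \<le> real (n+1) - real k"
proof -
  define \<Omega> where "\<Omega> = PiM {..n} (\<lambda>_. T)"
  interpret O: prob_space \<Omega> unfolding \<Omega>_def by (rule prob_space_PiM) (use T in auto)
  define cR where "cR i \<omega> = (\<Sum>j\<in>{..n}-{i}. if W (\<omega> j) < W (\<omega> i) then 1 else 0::real)" for i \<omega>
  define E where "E i = {\<omega>\<in>space \<Omega>. real k \<le> cR i \<omega>}" for i
  have comp: "(\<lambda>\<omega>. W (\<omega> j)) \<in> borel_measurable \<Omega>" if "j \<in> {..n}" for j
    unfolding \<Omega>_def by (rule measurable_compose[OF measurable_component_singleton[OF that] Wm])
  have cRm: "cR i \<in> borel_measurable \<Omega>" if "i \<le> n" for i
    unfolding cR_def
  proof (rule borel_measurable_sum)
    fix j assume "j \<in> {..n} - {i}"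
    have cj[measurable]: "(\<lambda>\<omega>. W (\<omega> j)) \<in> borel_measurable \<Omega>" using \<open>j \<in> {..n} - {i}\<close> by (intro comp) auto
    have ci[measurable]: "(\<lambda>\<omega>. W (\<omega> i)) \<in> borel_measurable \<Omega>" using \<open>i \<le> n\<close> by (intro comp) auto
    show "(\<lambda>\<omega>. if W (\<omega> j) < W (\<omega> i) then 1 else 0::real) \<in> borel_measurable \<Omega>"
      by measurable
  qed
  have Em: "E i \<in> sets \<Omega>" if "i \<le> n" for i
  proof -
    note [measurable] = cRm[OF that]
    show ?thesis unfolding E_def by measurable
  qed
  have cardE: "real (card {j\<in>{..n}. W (\<omega> j) < W (\<omega> i)}) = cR i \<omega>" for i \<omega>
  proof -
    have "{j\<in>{..n}. W (\<omega> j) < W (\<omega> i)} = {j\<in>{..n}-{i}. W (\<omega> j) < W (\<omega> i)}" by auto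
    moreover have "real (card {j\<in>{..n}-{i}. W (\<omega> j) < W (\<omega> i)}) = cR i \<omega>"
      unfolding cR_def by (rule card_sum_real) simp
    ultimately show ?thesis by simp
  qed
  have S0: "{\<omega> \<in> space \<Omega>. k \<le> card {j. j < n \<and> W (\<omega> j) < W (\<omega> n)}} = E n"
  proof -
    have "\<And>\<omega>. {j. j < n \<and> W (\<omega> j) < W (\<omega> n)} = {j\<in>{..n}. W (\<omega> j) < W (\<omega> n)}"
      by (auto simp: order_le_less)
    then show ?thesis unfolding E_def
    proof (intro Collect_cong conj_cong refl)
      fix \<omega> assume h: "\<And>\<omega>. {j. j < n \<and> W (\<omega> j) < W (\<omega> n)} = {j\<in>{..n}. W (\<omega> j) < W (\<omega> n)}"
      have "(k \<le> card {j\<in>{..n}. W (\<omega> j) < W (\<omega> n)}) = (real k \<le> real (card {j\<in>{..n}. W (\<omega> j) < W (\<omega> n)}))"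
        by (simp only: of_nat_le_iff)
      then show "(k \<le> card {j. j < n \<and> W (\<omega> j) < W (\<omega> n)}) = (real k \<le> cR n \<omega>)"
        by (simp only: h cardE)
    qed
  qed
  define \<sigma> where "\<sigma> i j = (if j = i then n else if j = n then i else j)" for i j :: nat
  define \<rho> where "\<rho> i \<omega> = (\<lambda>j\<in>{..n}. \<omega> (\<sigma> i j))" for i and \<omega> :: "nat \<Rightarrow> 'b"
  have eqm: "measure \<Omega> (E i) = measure \<Omega> (E n)" if i: "i \<le> n" for i
  proof -
    have \<rho>m: "\<rho> i \<in> measurable \<Omega> \<Omega>"
      unfolding \<rho>_def \<Omega>_def
      by (rule measurable_restrict, rule measurable_component_singleton) (use i in \<open>auto simp: \<sigma>_def\<close>)
    have inj: "inj_on (\<sigma> i) {..n}" unfolding inj_on_def \<sigma>_def by auto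
    have into: "\<sigma> i \<in> {..n} \<rightarrow> {..n}" using i unfolding \<sigma>_def by auto
    have D: "distr \<Omega> \<Omega> (\<rho> i) = \<Omega>"
      using distr_PiM_reindex[of "{..n}" "\<lambda>_. T" "\<sigma> i" "{..n}", OF _ inj into] T
      unfolding \<Omega>_def \<rho>_def by simp
    have pre: "\<rho> i -` E n \<inter> space \<Omega> = E i"
    proof (intro set_eqI iffI)
      fix \<omega> assume "\<omega> \<in> \<rho> i -` E n \<inter> space \<Omega>"
      then have w: "\<omega> \<in> space \<Omega>" "real k \<le> cR n (\<rho> i \<omega>)" by (auto simp: E_def)
      have "cR n (\<rho> i \<omega>) = cR i \<omega>"
      proof -
        have "cR n (\<rho> i \<omega>) = (\<Sum>j\<in>{..n}-{n}. if W (\<omega> (\<sigma> i j)) < W (\<omega> i) then 1 else 0::real)"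
          unfolding cR_def \<rho>_def by (intro sum.cong) (auto simp: \<sigma>_def)
        also have "\<dots> = cR i \<omega>" unfolding cR_def
          by (rule sum.reindex_bij_witness[where i="\<sigma> i" and j="\<sigma> i"]) (use i in \<open>auto simp: \<sigma>_def\<close>)
        finally show ?thesis .
      qed
      then show "\<omega> \<in> E i" using w by (simp add: E_def)
    next
      fix \<omega> assume "\<omega> \<in> E i"
      then have w: "\<omega> \<in> space \<Omega>" "real k \<le> cR i \<omega>" by (auto simp: E_def)
      have "cR n (\<rho> i \<omega>) = cR i \<omega>"
      proof -
        have "cR n (\<rho> i \<omega>) = (\<Sum>j\<in>{..n}-{n}. if W (\<omega> (\<sigma> i j)) < W (\<omega> i) then 1 else 0::real)"
          unfolding cR_def \<rho>_def by (intro sum.cong) (auto simp: \<sigma>_def)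
        also have "\<dots> = cR i \<omega>" unfolding cR_def
          by (rule sum.reindex_bij_witness[where i="\<sigma> i" and j="\<sigma> i"]) (use i in \<open>auto simp: \<sigma>_def\<close>)
        finally show ?thesis .
      qed
      moreover have "\<rho> i \<omega> \<in> space \<Omega>" using measurable_space[OF \<rho>m w(1)] .
      ultimately show "\<omega> \<in> \<rho> i -` E n \<inter> space \<Omega>" using w by (simp add: E_def)
    qed
    have "measure \<Omega> (E n) = measure (distr \<Omega> \<Omega> (\<rho> i)) (E n)" by (simp add: D)
    also have "\<dots> = measure \<Omega> (\<rho> i -` E n \<inter> space \<Omega>)" by (rule measure_distr[OF \<rho>m Em]) simp
    also have "\<dots> = measure \<Omega> (E i)" by (simp add: pre)
    finally show ?thesis by simp
  qed
  have fin: "\<And>i. i \<le> n \<Longrightarrow> emeasure \<Omega> (E i) < \<infinity>"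
    using O.emeasure_finite by (simp add: less_top[symmetric])
  have "(\<Sum>i\<in>{..n}. measure \<Omega> (E i)) = (\<Sum>i\<in>{..n}. (\<integral>\<omega>. indicator (E i) \<omega> \<partial>\<Omega>))"
  proof (intro sum.cong refl)
    fix i assume "i \<in> {..n}"
    then have "E i \<subseteq> space \<Omega>" by (auto simp: E_def)
    then show "measure \<Omega> (E i) = (\<integral>\<omega>. indicator (E i) \<omega> \<partial>\<Omega>)"
      by (simp add: Int_absorb2)
  qed
  also have "\<dots> = (\<integral>\<omega>. (\<Sum>i\<in>{..n}. indicator (E i) \<omega>) \<partial>\<Omega>)"
  proof (rule sym, rule Bochner_Integration.integral_sum)
    fix i assume "i \<in> {..n}"
    then show "integrable \<Omega> (\<lambda>\<omega>. indicator (E i) \<omega> :: real)"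
      using Em fin by (intro integrable_real_indicator) auto
  qed
  also have "\<dots> \<le> (\<integral>\<omega>. real (n+1) - real k \<partial>\<Omega>)"
  proof (rule integral_mono)
    show "integrable \<Omega> (\<lambda>\<omega>. \<Sum>i\<in>{..n}. indicator (E i) \<omega> :: real)"
    proof (rule Bochner_Integration.integrable_sum)
      fix i assume "i \<in> {..n}"
      then show "integrable \<Omega> (\<lambda>\<omega>. indicator (E i) \<omega> :: real)"
        using Em fin by (intro integrable_real_indicator) auto
    qed
    show "integrable \<Omega> (\<lambda>\<omega>. real (n+1) - real k)" by simp
    fix \<omega> assume w: "\<omega> \<in> space \<Omega>"
    have "(\<Sum>i\<in>{..n}. indicator (E i) \<omega> :: real) = real (card {i\<in>{..n}. \<omega> \<in> E i})"
    proof -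
      have "real (card {i\<in>{..n}. \<omega> \<in> E i}) = (\<Sum>i\<in>{..n}. if \<omega> \<in> E i then 1 else 0)"
        by (rule card_sum_real) simp
      moreover have "(\<Sum>i\<in>{..n}. indicator (E i) \<omega> :: real) = (\<Sum>i\<in>{..n}. if \<omega> \<in> E i then 1 else 0)"
        by (intro sum.cong refl) (simp add: indicator_def)
      ultimately show ?thesis by linarith
    qed
    also have "{i\<in>{..n}. \<omega> \<in> E i} = {i\<in>{..n}. k \<le> card {j\<in>{..n}. W (\<omega> j) < W (\<omega> i)}}"
      using w by (auto simp: E_def cardE[symmetric])
    finally have e: "(\<Sum>i\<in>{..n}. indicator (E i) \<omega> :: real) = real (card {i\<in>{..n}. k \<le> card {j\<in>{..n}. W (\<omega> j) < W (\<omega> i)}})" .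
    have "card {i\<in>{..n}. k \<le> card {j\<in>{..n}. W (\<omega> j) < W (\<omega> i)}} + k \<le> card {..n}"
      by (rule comb) (use kn in auto)
    then show "(\<Sum>i\<in>{..n}. indicator (E i) \<omega> :: real) \<le> real (n+1) - real k"
      unfolding e by simp
  qed
  also have "\<dots> = real (n+1) - real k" using O.prob_space by simp
  finally have "(\<Sum>i\<in>{..n}. measure \<Omega> (E i)) \<le> real (n+1) - real k" .
  moreover have "(\<Sum>i\<in>{..n}. measure \<Omega> (E i)) = real (n+1) * measure \<Omega> (E n)"
  proof -
    have "(\<Sum>i\<in>{..n}. measure \<Omega> (E i)) = (\<Sum>i\<in>{..n}. measure \<Omega> (E n))"
      by (rule sum.cong) (auto intro: eqm)
    then show ?thesis by simp
  qed
  ultimately show ?thesis using S0 unfolding \<Omega>_def by simp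
qed



lemma sets_triple[measurable_cong]: "sets (triple_law mu f) = sets ((mu \<Otimes>\<^sub>M borel) \<Otimes>\<^sub>M borel)"
  unfolding triple_law_def XY_law_def
  by (intro sets_pair_measure_cong) (auto intro!: sets_pair_measure_cong)

lemma sets_XY[measurable_cong]: "sets (XY_law mu f) = sets (mu \<Otimes>\<^sub>M borel)"
  unfolding XY_law_def by (auto intro!: sets_pair_measure_cong)

lemma XY_prob:
  assumes mu: "prob_space mu"
    and f_meas: "(\<lambda>(x,y). f x y) \<in> borel_measurable (mu \<Otimes>\<^sub>M borel)"
    and f_int: "\<And>x. x \<in> space mu \<Longrightarrow> (\<integral>\<^sup>+ y. ennreal (f x y) \<partial>lborel) = 1"
  shows "prob_space (XY_law mu f)"
proof (rule prob_spaceI)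
  interpret M: prob_space mu by (rule mu)
  note [measurable] = f_meas
  have "emeasure (XY_law mu f) (space (XY_law mu f)) = (\<integral>\<^sup>+p. ennreal ((\<lambda>(x,y). f x y) p) \<partial>(mu \<Otimes>\<^sub>M lborel))"
    unfolding XY_law_def
    by (subst emeasure_density) (auto simp: split_beta' intro!: nn_integral_cong sets.top[of "mu \<Otimes>\<^sub>M lborel", simplified])
  also have "\<dots> = (\<integral>\<^sup>+x. (\<integral>\<^sup>+y. ennreal (f x y) \<partial>lborel) \<partial>mu)"
    apply (subst lborel.nn_integral_fst[symmetric])
     apply measurable
    done
  also have "\<dots> = (\<integral>\<^sup>+x. 1 \<partial>mu)" by (intro nn_integral_cong) (simp add: f_int)
  also have "\<dots> = 1" using M.emeasure_space_1 by simp
  finally show "emeasure (XY_law mu f) (space (XY_law mu f)) = 1" .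
qed

lemma decomp:
  fixes F :: "('a \<times> real) \<times> real \<Rightarrow> ennreal"
  assumes f_meas: "(\<lambda>(x,y). f x y) \<in> borel_measurable (mu \<Otimes>\<^sub>M borel)"
    and Fm: "F \<in> borel_measurable ((mu \<Otimes>\<^sub>M borel) \<Otimes>\<^sub>M borel)"
  shows "(\<integral>\<^sup>+t. F t \<partial>triple_law mu f) = (\<integral>\<^sup>+x. (\<integral>\<^sup>+y. ennreal (f x y) * (\<integral>\<^sup>+u. F ((x,y),u) \<partial>unifU) \<partial>lborel) \<partial>mu)"
proof -
  interpret U: prob_space unifU by (rule unifU_prob)
  note [measurable] = f_meas Fm
  have "(\<integral>\<^sup>+t. F t \<partial>triple_law mu f) = (\<integral>\<^sup>+p. (\<integral>\<^sup>+u. F (p,u) \<partial>unifU) \<partial>XY_law mu f)"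
    unfolding triple_law_def
    apply (subst U.nn_integral_fst[symmetric])
     apply measurable
    done
  also have "\<dots> = (\<integral>\<^sup>+p. ennreal ((\<lambda>(x,y). f x y) p) * (\<integral>\<^sup>+u. F (p,u) \<partial>unifU) \<partial>(mu \<Otimes>\<^sub>M lborel))"
    unfolding XY_law_def
    apply (subst nn_integral_density)
      apply measurable
    apply (simp add: split_beta')
    done
  also have "\<dots> = (\<integral>\<^sup>+x. (\<integral>\<^sup>+y. ennreal (f x y) * (\<integral>\<^sup>+u. F ((x,y),u) \<partial>unifU) \<partial>lborel) \<partial>mu)"
    apply (subst lborel.nn_integral_fst[symmetric])
     apply measurable
    done
  finally show ?thesis .
qed

lemma inner:
  fixes mu :: "'a measure" and f h s :: "'a \<Rightarrow> real \<Rightarrow> real" and Q :: ereal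
  assumes mu: "prob_space mu"
    and f_meas: "(\<lambda>(x,y). f x y) \<in> borel_measurable (mu \<Otimes>\<^sub>M borel)"
    and f_nonneg: "\<And>x y. x \<in> space mu \<Longrightarrow> 0 \<le> f x y"
    and f_int: "\<And>x. x \<in> space mu \<Longrightarrow> (\<integral>\<^sup>+ y. ennreal (f x y) \<partial>lborel) = 1"
    and f_shape: "\<And>x. x \<in> space mu \<Longrightarrow> sym_unimodal (f x)"
    and h_meas: "(\<lambda>(x,u). h x u) \<in> borel_measurable (mu \<Otimes>\<^sub>M borel)"
    and noise_sym: "\<And>x. x \<in> space mu \<Longrightarrow>
                      distr unifU borel (h x) = distr unifU borel (\<lambda>u. - h x u)"
    and s_meas: "(\<lambda>(x,y). s x y) \<in> borel_measurable (mu \<Otimes>\<^sub>M borel)"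
    and good: "\<And>x. x \<in> space mu \<Longrightarrow> is_interval {y. ereal (s x y) \<le> Q} \<and>
        (\<forall>t. is_median (noisy_cond_law f h x) t \<longrightarrow> t \<in> {y. ereal (s x y) \<le> Q})"
  shows "(\<integral>\<^sup>+t. indicator {y. ereal (s (fst (fst t)) y) \<le> Q} (snd (fst t) + h (fst (fst t)) (snd t)) \<partial>triple_law mu f)
      \<le> (\<integral>\<^sup>+t. indicator {y. ereal (s (fst (fst t)) y) \<le> Q} (snd (fst t)) \<partial>triple_law mu f)"
proof -
  interpret U: prob_space unifU by (rule unifU_prob)
  interpret LU: pair_sigma_finite lborel unifU by unfold_locales
  note [measurable] = f_meas h_meas s_meas
  define Cx where "Cx x = {y. ereal (s x y) \<le> Q}" for x
  have Fn: "(\<lambda>t. indicator (Cx (fst (fst t))) (snd (fst t) + h (fst (fst t)) (snd t)) :: ennreal) \<in> borel_measurable ((mu \<Otimes>\<^sub>M borel) \<Otimes>\<^sub>M borel)"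
    unfolding Cx_def indicator_def mem_Collect_eq by measurable
  have Fc: "(\<lambda>t. indicator (Cx (fst (fst t))) (snd (fst t)) :: ennreal) \<in> borel_measurable ((mu \<Otimes>\<^sub>M borel) \<Otimes>\<^sub>M borel)"
    unfolding Cx_def indicator_def mem_Collect_eq by measurable
  have key: "(\<integral>\<^sup>+y. ennreal (f x y) * (\<integral>\<^sup>+u. indicator (Cx x) (y + h x u) \<partial>unifU) \<partial>lborel)
     \<le> (\<integral>\<^sup>+y. ennreal (f x y) * (\<integral>\<^sup>+u. indicator (Cx x) y \<partial>unifU) \<partial>lborel)" if x: "x \<in> space mu" for x
  proof -
    obtain m where sym: "\<And>t. f x (m + t) = f x (m - t)" and mono: "mono_on {..m} (f x)"
      using f_shape[OF x] unfolding sym_unimodal_def by blast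
    have gm[measurable]: "f x \<in> borel_measurable borel"
      using measurable_Pair2[OF f_meas x] by simp
    have Hm[measurable]: "h x \<in> borel_measurable borel"
      using measurable_Pair2[OF h_meas x] by simp
    have sm[measurable]: "s x \<in> borel_measurable borel"
      using measurable_Pair2[OF s_meas x] by simp
    have Im[measurable]: "Cx x \<in> sets borel" unfolding Cx_def by measurable
    have Iint: "is_interval (Cx x)" using good[OF x] unfolding Cx_def by blast
    have med: "is_median (noisy_cond_law f h x) m"
      unfolding noisy_cond_law_def
      by (rule median_lemma[OF gm f_nonneg[OF x] sym f_int[OF x] Hm noise_sym[OF x]])
    have mI: "m \<in> Cx x" using good[OF x] med unfolding Cx_def by blast
    have "(\<integral>\<^sup>+y. ennreal (f x y) * (\<integral>\<^sup>+u. indicator (Cx x) (y + h x u) \<partial>unifU) \<partial>lborel)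
        = (\<integral>\<^sup>+y. (\<integral>\<^sup>+u. ennreal (f x y) * indicator (Cx x) (y + h x u) \<partial>unifU) \<partial>lborel)"
    proof (rule nn_integral_cong)
      fix y
      have m1: "(\<lambda>u. indicator (Cx x) (y + h x u) :: ennreal) \<in> borel_measurable unifU" by measurable
      show "ennreal (f x y) * (\<integral>\<^sup>+u. indicator (Cx x) (y + h x u) \<partial>unifU) = (\<integral>\<^sup>+u. ennreal (f x y) * indicator (Cx x) (y + h x u) \<partial>unifU)"
        by (rule nn_integral_cmult[OF m1, symmetric])
    qed
    also have "\<dots> = (\<integral>\<^sup>+u. (\<integral>\<^sup>+y. ennreal (f x y) * indicator (Cx x) (y + h x u) \<partial>lborel) \<partial>unifU)"
    proof (rule LU.Fubini'[symmetric])
      show "(\<lambda>(y, u). ennreal (f x y) * indicator (Cx x) (y + h x u)) \<in> borel_measurable (lborel \<Otimes>\<^sub>M unifU)"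
        by measurable
    qed
    also have "\<dots> \<le> (\<integral>\<^sup>+y. ennreal (f x y) * indicator (Cx x) y \<partial>lborel)"
      by (rule noise_avg[OF gm f_nonneg[OF x] sym mono Im Iint mI Hm noise_sym[OF x]])
    also have "\<dots> = (\<integral>\<^sup>+y. ennreal (f x y) * (\<integral>\<^sup>+u. indicator (Cx x) y \<partial>unifU) \<partial>lborel)"
      using U.emeasure_space_1 by simp
    finally show ?thesis .
  qed
  have "(\<integral>\<^sup>+t. indicator (Cx (fst (fst t))) (snd (fst t) + h (fst (fst t)) (snd t)) \<partial>triple_law mu f)
      = (\<integral>\<^sup>+x. (\<integral>\<^sup>+y. ennreal (f x y) * (\<integral>\<^sup>+u. indicator (Cx x) (y + h x u) \<partial>unifU) \<partial>lborel) \<partial>mu)"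
    using decomp[OF f_meas Fn] by simp
  also have "\<dots> \<le> (\<integral>\<^sup>+x. (\<integral>\<^sup>+y. ennreal (f x y) * (\<integral>\<^sup>+u. indicator (Cx x) y \<partial>unifU) \<partial>lborel) \<partial>mu)"
    by (rule nn_integral_mono) (rule key)
  also have "\<dots> = (\<integral>\<^sup>+t. indicator (Cx (fst (fst t))) (snd (fst t)) \<partial>triple_law mu f)"
    using decomp[OF f_meas Fc] by simp
  finally show ?thesis unfolding Cx_def .
qed



lemma cnt_sets:
  fixes T :: "'b measure" and W :: "'b \<Rightarrow> real" and Z :: "(nat \<Rightarrow> 'b) \<Rightarrow> real"
  assumes Wm: "W \<in> borel_measurable T" and Zm: "Z \<in> borel_measurable (PiM {..n} (\<lambda>_. T))"
  shows "{\<omega> \<in> space (PiM {..n} (\<lambda>_. T)). card {j. j < n \<and> W (\<omega> j) < Z \<omega>} < k} \<in> sets (PiM {..n} (\<lambda>_. T))"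
proof -
  define c where "c \<omega> = (\<Sum>j\<in>{..<n}. if W (\<omega> j) < Z \<omega> then 1 else 0 :: real)" for \<omega>
  have cm[measurable]: "c \<in> borel_measurable (PiM {..n} (\<lambda>_. T))" unfolding c_def
  proof (rule borel_measurable_sum)
    fix j assume j: "j \<in> {..<n}"
    have cj[measurable]: "(\<lambda>\<omega>. W (\<omega> j)) \<in> borel_measurable (PiM {..n} (\<lambda>_. T))"
      by (rule measurable_compose[OF measurable_component_singleton[of j "{..n}" "\<lambda>_. T"] Wm]) (use j in auto)
    note [measurable] = Zm
    show "(\<lambda>\<omega>. if W (\<omega> j) < Z \<omega> then 1 else 0 :: real) \<in> borel_measurable (PiM {..n} (\<lambda>_. T))"
      by measurable
  qed
  have eq: "real (card {j. j < n \<and> W (\<omega> j) < Z \<omega>}) = c \<omega>" for \<omega>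
  proof -
    have "{j. j < n \<and> W (\<omega> j) < Z \<omega>} = {j\<in>{..<n}. W (\<omega> j) < Z \<omega>}" by auto
    moreover have "real (card {j\<in>{..<n}. W (\<omega> j) < Z \<omega>}) = c \<omega>"
      unfolding c_def by (rule card_sum_real) simp
    ultimately show ?thesis by simp
  qed
  have "{\<omega> \<in> space (PiM {..n} (\<lambda>_. T)). card {j. j < n \<and> W (\<omega> j) < Z \<omega>} < k}
      = {\<omega> \<in> space (PiM {..n} (\<lambda>_. T)). c \<omega> < real k}"
  proof (intro Collect_cong conj_cong refl)
    fix \<omega>
    have "(card {j. j < n \<and> W (\<omega> j) < Z \<omega>} < k) = (real (card {j. j < n \<and> W (\<omega> j) < Z \<omega>}) < real k)"
      by (simp only: of_nat_less_iff)
    then show "(card {j. j < n \<and> W (\<omega> j) < Z \<omega>} < k) = (c \<omega> < real k)" by (simp only: eq)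
  qed
  also have "\<dots> \<in> sets (PiM {..n} (\<lambda>_. T))" by measurable
  finally show ?thesis .
qed

lemma AE_drop:
  fixes T :: "'b measure" and P :: "(nat \<Rightarrow> 'b) \<Rightarrow> bool"
  assumes Tp: "prob_space T" and fin: "finite I" and nI: "i \<notin> I"
    and AE: "AE \<omega> in PiM (insert i I) (\<lambda>_. T). P \<omega>"
  shows "AE \<omega>' in PiM I (\<lambda>_. T). \<exists>t\<in>space T. P (\<omega>'(i:=t))"
proof -
  interpret T: prob_space T by (rule Tp)
  interpret PS: product_sigma_finite "\<lambda>_::nat. T"
    by (rule product_sigma_finite.intro, rule prob_space_imp_sigma_finite[OF Tp])
  from AE obtain N where N: "{\<omega>\<in>space (PiM (insert i I) (\<lambda>_. T)). \<not> P \<omega>} \<subseteq> N"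
      "emeasure (PiM (insert i I) (\<lambda>_. T)) N = 0" "N \<in> sets (PiM (insert i I) (\<lambda>_. T))"
    by (rule AE_E)
  have ad: "(\<lambda>(f, y). f(i := y)) \<in> measurable (PiM I (\<lambda>_. T) \<Otimes>\<^sub>M T) (PiM (insert i I) (\<lambda>_. T))"
    using measurable_add_dim[of i I "\<lambda>_. T"] by simp
  have jm: "(\<lambda>p. indicator N ((\<lambda>(f, y). f(i := y)) p) :: ennreal) \<in> borel_measurable (PiM I (\<lambda>_. T) \<Otimes>\<^sub>M T)"
    by (rule measurable_compose[OF ad borel_measurable_indicator[OF N(3)]])
  have jm2: "(\<lambda>(\<omega>', t). indicator N (\<omega>'(i:=t)) :: ennreal) \<in> borel_measurable (PiM I (\<lambda>_. T) \<Otimes>\<^sub>M T)"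
    using jm by (simp add: split_beta')
  have m1: "(\<lambda>\<omega>'. \<integral>\<^sup>+t. indicator N (\<omega>'(i:=t)) \<partial>T) \<in> borel_measurable (PiM I (\<lambda>_. T))"
    by (rule T.borel_measurable_nn_integral[OF jm2])
  have "0 = emeasure (PiM (insert i I) (\<lambda>_. T)) N" using N(2) by simp
  also have "\<dots> = (\<integral>\<^sup>+\<omega>. indicator N \<omega> \<partial>PiM (insert i I) (\<lambda>_. T))" using N(3) by simp
  also have "\<dots> = (\<integral>\<^sup>+\<omega>'. (\<integral>\<^sup>+t. indicator N (\<omega>'(i:=t)) \<partial>T) \<partial>PiM I (\<lambda>_. T))"
    by (rule PS.product_nn_integral_insert[OF fin nI]) (use N(3) in simp)
  finally have z: "(\<integral>\<^sup>+\<omega>'. (\<integral>\<^sup>+t. indicator N (\<omega>'(i:=t)) \<partial>T) \<partial>PiM I (\<lambda>_. T)) = 0" by simp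
  have AE1: "AE \<omega>' in PiM I (\<lambda>_. T). (\<integral>\<^sup>+t. indicator N (\<omega>'(i:=t)) \<partial>T) = 0"
    using z nn_integral_0_iff_AE[OF m1] by simp
  show ?thesis
  proof (rule AE_mp[OF AE1], rule AE_I2, rule impI)
    fix \<omega>' assume w: "\<omega>' \<in> space (PiM I (\<lambda>_. T))" and z: "(\<integral>\<^sup>+t. indicator N (\<omega>'(i:=t)) \<partial>T) = 0"
    have mt: "(\<lambda>t. indicator N (\<omega>'(i:=t)) :: ennreal) \<in> borel_measurable T"
      using measurable_Pair2[OF jm2 w] by simp
    have AEt: "AE t in T. indicator N (\<omega>'(i:=t)) = (0::ennreal)"
      using z nn_integral_0_iff_AE[OF mt] by simp
    have "\<not> (\<forall>t\<in>space T. \<omega>'(i:=t) \<in> N)"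
    proof
      assume all: "\<forall>t\<in>space T. \<omega>'(i:=t) \<in> N"
      have "AE t in T. False"
        by (rule AE_mp[OF AEt], rule AE_I2) (use all in auto)
      then show False using T.AE_False by simp
    qed
    then obtain t where t: "t \<in> space T" "\<omega>'(i:=t) \<notin> N" by blast
    have "\<omega>'(i:=t) \<in> space (PiM (insert i I) (\<lambda>_. T))"
      using measurable_space[OF ad, of "(\<omega>', t)"] w t by (simp add: space_pair_measure)
    then have "P (\<omega>'(i:=t))" using N(1) t by blast
    then show "\<exists>t\<in>space T. P (\<omega>'(i:=t))" using t by blast
  qed
qed

theorem mainTheorem2:
  fixes mu :: "'a measure"
    and f :: "'a \<Rightarrow> real \<Rightarrow> real"
    and h :: "'a \<Rightarrow> real \<Rightarrow> real"
    and s :: "'a \<Rightarrow> real \<Rightarrow> real"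
    and n :: nat and \<alpha> :: real
  assumes alpha: "0 < \<alpha>" "\<alpha> < 1"
    and mu: "prob_space mu"
    and f_meas: "(\<lambda>(x,y). f x y) \<in> borel_measurable (mu \<Otimes>\<^sub>M borel)"
    and f_nonneg: "\<And>x y. x \<in> space mu \<Longrightarrow> 0 \<le> f x y"
    and f_int: "\<And>x. x \<in> space mu \<Longrightarrow> (\<integral>\<^sup>+ y. ennreal (f x y) \<partial>lborel) = 1"
    and f_shape: "\<And>x. x \<in> space mu \<Longrightarrow> sym_unimodal (f x)"
    and h_meas: "(\<lambda>(x,u). h x u) \<in> borel_measurable (mu \<Otimes>\<^sub>M borel)"
    and noise_sym: "\<And>x. x \<in> space mu \<Longrightarrow>
                      distr unifU borel (h x) = distr unifU borel (\<lambda>u. - h x u)"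
    and s_meas: "(\<lambda>(x,y). s x y) \<in> borel_measurable (mu \<Otimes>\<^sub>M borel)"
    and C_shape: "AE \<omega> in data_law n mu f. \<forall>x \<in> space mu.
                    is_interval (C_noisy n \<alpha> s h \<omega> x) \<and>
                    (\<forall>t. is_median (noisy_cond_law f h x) t \<longrightarrow> t \<in> C_noisy n \<alpha> s h \<omega> x)"
  shows "measure (data_law n mu f)
           {\<omega> \<in> space (data_law n mu f). Yof \<omega> n \<in> C_noisy n \<alpha> s h \<omega> (Xof \<omega> n)} \<ge> 1 - \<alpha>"
proof -
  define T where "T = triple_law mu f"
  define \<Omega> where "\<Omega> = data_law n mu f"
  define k where "k = nat \<lceil>(real n + 1) * (1 - \<alpha>)\<rceil>"
  define W where "W t = s (fst (fst t)) (snd (fst t) + h (fst (fst t)) (snd t))" for t :: "('a \<times> real) \<times> real"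
  define Wc where "Wc t = s (fst (fst t)) (snd (fst t))" for t :: "('a \<times> real) \<times> real"
  interpret M: prob_space mu by (rule mu)
  interpret U: prob_space unifU by (rule unifU_prob)
  have XYp: "prob_space (XY_law mu f)" by (rule XY_prob[OF mu f_meas f_int])
  have Tp: "prob_space T" unfolding T_def triple_law_def by (rule prob_space_pair[OF XYp U.prob_space_axioms])
  interpret TT: prob_space T by (rule Tp)
  have \<Omega>Pi: "\<Omega> = PiM {..n} (\<lambda>_. T)" unfolding \<Omega>_def data_law_def T_def ..
  interpret O: prob_space \<Omega> unfolding \<Omega>Pi by (rule prob_space_PiM) (use Tp in auto)
  note [measurable] = f_meas h_meas s_meas
  have Wm: "W \<in> borel_measurable T" unfolding W_def T_def by measurable
  have Wcm: "Wc \<in> borel_measurable T" unfolding Wc_def T_def by measurable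
  have qloc: "q_noisy n \<alpha> s h ((fun_upd \<omega> n t)) = q_noisy n \<alpha> s h \<omega>" for \<omega> t
  proof -
    have "map (\<lambda>i. s (Xof ((fun_upd \<omega> n t)) i) (Ytil h ((fun_upd \<omega> n t)) i)) [0..<n] = map (\<lambda>i. s (Xof \<omega> i) (Ytil h \<omega> i)) [0..<n]"
      by (rule map_cong) (auto simp: Xof_def Ytil_def Yof_def Uof_def)
    note e = this
    show ?thesis unfolding q_noisy_def conf_quantile_def Let_def e ..
  qed
  have Vf1: "s (Xof \<omega> i) (Ytil h \<omega> i) = W (\<omega> i)" for \<omega> i
    by (simp add: W_def Xof_def Ytil_def Yof_def Uof_def)
  have Vf2: "s (Xof \<omega> i) (Yof \<omega> i) = Wc (\<omega> i)" for \<omega> i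
    by (simp add: Wc_def Xof_def Yof_def)
  define G where "G = {\<omega> \<in> space \<Omega>. Yof \<omega> n \<in> C_noisy n \<alpha> s h \<omega> (Xof \<omega> n)}"
  define B where "B = {\<omega> \<in> space \<Omega>. Ytil h \<omega> n \<in> C_noisy n \<alpha> s h \<omega> (Xof \<omega> n)}"
  have goalG: "?thesis \<longleftrightarrow> 1 - \<alpha> \<le> measure \<Omega> G" unfolding G_def \<Omega>_def by simp
  show ?thesis
  proof (cases "k \<le> n")
    case False
    have "G = space \<Omega>" unfolding G_def C_noisy_def q_noisy_def using quant_inf[OF k_def False] by auto
    then show ?thesis unfolding goalG using O.prob_space alpha by simp
  next
    case True
    have Gc: "G = {\<omega>\<in>space \<Omega>. card {j. j < n \<and> W (\<omega> j) < Wc (\<omega> n)} < k}"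
      unfolding G_def C_noisy_def q_noisy_def mem_Collect_eq
      by (simp only: quant_iff[OF k_def True alpha(2)] Vf1 Vf2)
    have Bc: "B = {\<omega>\<in>space \<Omega>. card {j. j < n \<and> W (\<omega> j) < W (\<omega> n)} < k}"
      unfolding B_def C_noisy_def q_noisy_def mem_Collect_eq
      by (simp only: quant_iff[OF k_def True alpha(2)] Vf1)
    have Wn: "(\<lambda>\<omega>. W (\<omega> n)) \<in> borel_measurable (PiM {..n} (\<lambda>_. T))"
      by (rule measurable_compose[OF measurable_component_singleton[of n "{..n}" "\<lambda>_. T"] Wm]) simp
    have Wcn: "(\<lambda>\<omega>. Wc (\<omega> n)) \<in> borel_measurable (PiM {..n} (\<lambda>_. T))"
      by (rule measurable_compose[OF measurable_component_singleton[of n "{..n}" "\<lambda>_. T"] Wcm]) simp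
    have Gm: "G \<in> sets \<Omega>" unfolding Gc \<Omega>Pi by (rule cnt_sets[OF Wm Wcn])
    have Bm: "B \<in> sets \<Omega>" unfolding Bc \<Omega>Pi by (rule cnt_sets[OF Wm Wn])
    have compB: "space \<Omega> - B = {\<omega> \<in> space (PiM {..n} (\<lambda>_. T)). k \<le> card {j. j < n \<and> W (\<omega> j) < W (\<omega> n)}}"
      unfolding Bc \<Omega>Pi by auto
    have ex: "real (n+1) * measure \<Omega> (space \<Omega> - B) \<le> real (n+1) - real k"
      unfolding compB using exch[OF Tp Wm, of k n] True unfolding \<Omega>Pi by simp
    have kge: "(real n + 1) * (1 - \<alpha>) \<le> real k" unfolding k_def by linarith
    have mB: "1 - \<alpha> \<le> measure \<Omega> B"
    proof -
      have "measure \<Omega> (space \<Omega> - B) = 1 - measure \<Omega> B" by (rule O.prob_compl[OF Bm])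
      then have "real (n+1) * (1 - measure \<Omega> B) \<le> real (n+1) - (real n + 1) * (1 - \<alpha>)"
        using ex kge by simp
      then have "real (n+1) * (1 - measure \<Omega> B) \<le> real (n+1) * \<alpha>" by (simp add: algebra_simps)
      then have "1 - measure \<Omega> B \<le> \<alpha>" by (rule mult_left_le_imp_le) simp
      then show ?thesis by simp
    qed
    have main: "measure \<Omega> B \<le> measure \<Omega> G"
    proof -
      define \<Omega>' where "\<Omega>' = PiM {..<n} (\<lambda>_. T)"
      interpret PS: product_sigma_finite "\<lambda>_::nat. T"
        by (rule product_sigma_finite.intro, rule prob_space_imp_sigma_finite[OF Tp])
      have ins: "{..n} = insert n {..<n}" by auto
      have \<Omega>ins: "\<Omega> = PiM (insert n {..<n}) (\<lambda>_. T)" unfolding \<Omega>Pi ins ..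
      have dec: "emeasure \<Omega> S = (\<integral>\<^sup>+\<omega>'. (\<integral>\<^sup>+t. indicator S ((fun_upd \<omega>' n t)) \<partial>T) \<partial>\<Omega>')" if S: "S \<in> sets \<Omega>" for S
      proof -
        have "emeasure \<Omega> S = (\<integral>\<^sup>+\<omega>. indicator S \<omega> \<partial>PiM (insert n {..<n}) (\<lambda>_. T))"
          using S unfolding \<Omega>ins by simp
        also have "\<dots> = (\<integral>\<^sup>+\<omega>'. (\<integral>\<^sup>+t. indicator S ((fun_upd \<omega>' n t)) \<partial>T) \<partial>\<Omega>')"
          unfolding \<Omega>'_def by (rule PS.product_nn_integral_insert) (use S \<Omega>ins in simp_all)
        finally show ?thesis .
      qed
      have ad: "(\<lambda>(f, y). f(n := y)) \<in> measurable (\<Omega>' \<Otimes>\<^sub>M T) \<Omega>"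
        using measurable_add_dim[of n "{..<n}" "\<lambda>_. T"] unfolding \<Omega>'_def \<Omega>ins by simp
      have inS: "(fun_upd \<omega>' n t) \<in> space \<Omega>" if "\<omega>' \<in> space \<Omega>'" "t \<in> space T" for \<omega>' t
        using measurable_space[OF ad, of "(\<omega>', t)"] that by (simp add: space_pair_measure)
      have indG: "indicator G ((fun_upd \<omega>' n t)) = (indicator {y. ereal (s (fst (fst t)) y) \<le> q_noisy n \<alpha> s h \<omega>'} (snd (fst t)) :: ennreal)"
        if "\<omega>' \<in> space \<Omega>'" "t \<in> space T" for \<omega>' t
        using inS[OF that] unfolding G_def C_noisy_def indicator_def by (simp add: qloc Xof_def Yof_def)
      have indB: "indicator B ((fun_upd \<omega>' n t)) = (indicator {y. ereal (s (fst (fst t)) y) \<le> q_noisy n \<alpha> s h \<omega>'} (snd (fst t) + h (fst (fst t)) (snd t)) :: ennreal)"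
        if "\<omega>' \<in> space \<Omega>'" "t \<in> space T" for \<omega>' t
        using inS[OF that] unfolding B_def C_noisy_def indicator_def by (simp add: qloc Xof_def Yof_def Ytil_def Uof_def)
      have AE0: "AE \<omega> in PiM (insert n {..<n}) (\<lambda>_. T). \<forall>x \<in> space mu.
                    is_interval (C_noisy n \<alpha> s h \<omega> x) \<and>
                    (\<forall>t. is_median (noisy_cond_law f h x) t \<longrightarrow> t \<in> C_noisy n \<alpha> s h \<omega> x)"
        using C_shape unfolding \<Omega>_def[symmetric] \<Omega>ins .
      have AEg: "AE \<omega>' in \<Omega>'. \<forall>x \<in> space mu. is_interval {y. ereal (s x y) \<le> q_noisy n \<alpha> s h \<omega>'} \<and>
            (\<forall>t. is_median (noisy_cond_law f h x) t \<longrightarrow> t \<in> {y. ereal (s x y) \<le> q_noisy n \<alpha> s h \<omega>'})"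
      proof -
        have AEd: "AE \<omega>' in \<Omega>'. \<exists>t\<in>space T. \<forall>x \<in> space mu.
                    is_interval (C_noisy n \<alpha> s h (fun_upd \<omega>' n t) x) \<and>
                    (\<forall>ta. is_median (noisy_cond_law f h x) ta \<longrightarrow> ta \<in> C_noisy n \<alpha> s h (fun_upd \<omega>' n t) x)"
          using AE_drop[OF Tp _ _ AE0] unfolding \<Omega>'_def by simp
        show ?thesis
          by (rule AE_mp[OF AEd], rule AE_I2, rule impI) (auto simp: C_noisy_def qloc)
      qed
      have "emeasure \<Omega> B = (\<integral>\<^sup>+\<omega>'. (\<integral>\<^sup>+t. indicator B ((fun_upd \<omega>' n t)) \<partial>T) \<partial>\<Omega>')" by (rule dec[OF Bm])
      also have "\<dots> = (\<integral>\<^sup>+\<omega>'. (\<integral>\<^sup>+t. indicator {y. ereal (s (fst (fst t)) y) \<le> q_noisy n \<alpha> s h \<omega>'} (snd (fst t) + h (fst (fst t)) (snd t)) \<partial>T) \<partial>\<Omega>')"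
        by (intro nn_integral_cong) (simp add: indB)
      also have "\<dots> \<le> (\<integral>\<^sup>+\<omega>'. (\<integral>\<^sup>+t. indicator {y. ereal (s (fst (fst t)) y) \<le> q_noisy n \<alpha> s h \<omega>'} (snd (fst t)) \<partial>T) \<partial>\<Omega>')"
      proof (rule nn_integral_mono_AE)
        show "AE \<omega>' in \<Omega>'. (\<integral>\<^sup>+t. indicator {y. ereal (s (fst (fst t)) y) \<le> q_noisy n \<alpha> s h \<omega>'} (snd (fst t) + h (fst (fst t)) (snd t)) \<partial>T)
           \<le> (\<integral>\<^sup>+t. indicator {y. ereal (s (fst (fst t)) y) \<le> q_noisy n \<alpha> s h \<omega>'} (snd (fst t)) \<partial>T)"
          using AEg
        proof (rule AE_mp, intro AE_I2 impI)
          fix \<omega>' assume g: "\<forall>x \<in> space mu. is_interval {y. ereal (s x y) \<le> q_noisy n \<alpha> s h \<omega>'} \<and>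
            (\<forall>t. is_median (noisy_cond_law f h x) t \<longrightarrow> t \<in> {y. ereal (s x y) \<le> q_noisy n \<alpha> s h \<omega>'})"
          show "(\<integral>\<^sup>+t. indicator {y. ereal (s (fst (fst t)) y) \<le> q_noisy n \<alpha> s h \<omega>'} (snd (fst t) + h (fst (fst t)) (snd t)) \<partial>T)
           \<le> (\<integral>\<^sup>+t. indicator {y. ereal (s (fst (fst t)) y) \<le> q_noisy n \<alpha> s h \<omega>'} (snd (fst t)) \<partial>T)"
            unfolding T_def
            by (rule inner[OF mu f_meas f_nonneg f_int f_shape h_meas noise_sym s_meas]) (assumption | erule bspec[OF g])+
        qed
      qed
      also have "\<dots> = (\<integral>\<^sup>+\<omega>'. (\<integral>\<^sup>+t. indicator G ((fun_upd \<omega>' n t)) \<partial>T) \<partial>\<Omega>')"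
        by (intro nn_integral_cong) (simp add: indG)
      also have "\<dots> = emeasure \<Omega> G" by (rule dec[OF Gm, symmetric])
      finally have "emeasure \<Omega> B \<le> emeasure \<Omega> G" .
      then show ?thesis by (simp add: O.emeasure_eq_measure)
    qed
    show ?thesis unfolding goalG using mB main by linarith
  qed
qed


end
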